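(* Let $\mathcal P$ be a finite set of points in an arbitrary metric space, and let $G=(\mathcal P,E)$ be an undirected network in which every agent is greedy connected and whose number of edges is minimum among all such networks on $\mathcal P$ (a social optimum network). Then there is an assignment of each edge of $E$ to exactly one of its endpoints as owner such that the resulting strategy profile of the undirected greedy routing network creation game is a $2$-approximate Nash equilibrium.
   Context: Undirected variant of the game: $\mathcal P$ is a finite set of points (agents) with metric $d$; each agent $u$ chooses a strategy $S_u\subseteq\{\{u,v\}:v\in\mathcal P\setminus\{u\}\}$ of undirected edges, which it owns; a profile $\mathbf s$ induces the network $G(\mathbf s)$ on $\mathcal P$ in which $\{u,v\}$ is an edge iff $\{u,v\}\in S_u\cup S_v$. A greedy routing path from $u$ to $w$ is a path $(x_1=u,\dots,x_j=w)$ in the network with $d(x_i,w)>d(x_{i+1},w)$ for all $i$; $u$ is greedy connected if it has a greedy routing path to every other agent. The cost of $u$ is $c_u(\mathbf s)=|S_u|$ if $u$ is greedy connected and $\infty$ otherwise. A profile $\mathbf s$ is a $\beta$-approximate Nash equilibrium if no agent $u$ can, by unilaterally changing its strategy, obtain cost strictly less than $\frac1\beta c_u(\mathbf s)$. *)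

theory Defs
  imports Complex_Main "HOL-Library.Extended_Real"
begin

definition metric_on :: "'a set \<Rightarrow> ('a \<Rightarrow> 'a \<Rightarrow> real) \<Rightarrow> bool" where
  "metric_on P d \<longleftrightarrow>
     (\<forall>x\<in>P. \<forall>y\<in>P. d x y \<ge> 0 \<and> (d x y = 0 \<longleftrightarrow> x = y) \<and> d x y = d y x) \<and>
     (\<forall>x\<in>P. \<forall>y\<in>P. \<forall>z\<in>P. d x z \<le> d x y + d y z)"

definition all_edges :: "'a set \<Rightarrow> 'a set set" where
  "all_edges P = {{u, v} | u v. u \<in> P \<and> v \<in> P \<and> u \<noteq> v}"

definition valid_strategy :: "'a set \<Rightarrow> 'a \<Rightarrow> 'a set set \<Rightarrow> bool" where
  "valid_strategy P u S \<longleftrightarrow> S \<subseteq> {{u, v} | v. v \<in> P - {u}}"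

definition network :: "'a set \<Rightarrow> ('a \<Rightarrow> 'a set set) \<Rightarrow> 'a set set" where
  "network P s = (\<Union>u\<in>P. s u)"

definition greedy_path :: "'a set set \<Rightarrow> ('a \<Rightarrow> 'a \<Rightarrow> real) \<Rightarrow> 'a \<Rightarrow> 'a \<Rightarrow> 'a list \<Rightarrow> bool" where
  "greedy_path E d u w xs \<longleftrightarrow> xs \<noteq> [] \<and> hd xs = u \<and> last xs = w \<and>
     (\<forall>i < length xs - 1. {xs ! i, xs ! Suc i} \<in> E \<and> d (xs ! i) w > d (xs ! Suc i) w)"

definition greedy_connected :: "'a set \<Rightarrow> ('a \<Rightarrow> 'a \<Rightarrow> real) \<Rightarrow> 'a set set \<Rightarrow> 'a \<Rightarrow> bool" where
  "greedy_connected P d E u \<longleftrightarrow> (\<forall>w\<in>P - {u}. \<exists>xs. greedy_path E d u w xs)"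

definition social_optimum :: "'a set \<Rightarrow> ('a \<Rightarrow> 'a \<Rightarrow> real) \<Rightarrow> 'a set set \<Rightarrow> bool" where
  "social_optimum P d E \<longleftrightarrow> E \<subseteq> all_edges P \<and> (\<forall>u\<in>P. greedy_connected P d E u) \<and>
     (\<forall>E'. E' \<subseteq> all_edges P \<and> (\<forall>u\<in>P. greedy_connected P d E' u) \<longrightarrow> card E \<le> card E')"

definition cost :: "'a set \<Rightarrow> ('a \<Rightarrow> 'a \<Rightarrow> real) \<Rightarrow> ('a \<Rightarrow> 'a set set) \<Rightarrow> 'a \<Rightarrow> ereal" where
  "cost P d s u = (if greedy_connected P d (network P s) u then ereal (real (card (s u))) else \<infinity>)"

definition approx_NE :: "'a set \<Rightarrow> ('a \<Rightarrow> 'a \<Rightarrow> real) \<Rightarrow> real \<Rightarrow> ('a \<Rightarrow> 'a set set) \<Rightarrow> bool" where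
  "approx_NE P d \<beta> s \<longleftrightarrow>
     (\<forall>u\<in>P. \<forall>S'. valid_strategy P u S' \<longrightarrow>
        \<not> (cost P d (s(u := S')) u < cost P d s u / ereal \<beta>))"

end

theory Submission
  imports Defs
begin

lemma all_edges_mem:
  assumes "e \<in> all_edges P"
  shows "\<exists>a b. e = {a, b} \<and> a \<in> P \<and> b \<in> P \<and> a \<noteq> b"
  using assms unfolding all_edges_def by blast

lemma all_edges_pair:
  assumes "{x, y} \<in> all_edges P"
  shows "x \<in> P \<and> y \<in> P \<and> x \<noteq> y"
proof -
  obtain a b where "{x, y} = {a, b}" "a \<in> P" "b \<in> P" "a \<noteq> b"
    using all_edges_mem[OF assms] by blast
  then show ?thesis by (auto simp: doubleton_eq_iff)
qed

lemma finite_all_edges: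
  assumes "finite P"
  shows "finite (all_edges P)"
proof -
  have "all_edges P \<subseteq> Pow P" unfolding all_edges_def by auto
  then show ?thesis using assms finite_subset by blast
qed

lemma path_step:
  assumes "greedy_path F d y w ys" "{x, y} \<in> F" "d y w < d x w"
  shows "greedy_path F d x w (x # ys)"
proof -
  have ne: "ys \<noteq> []" and hy: "hd ys = y" and ly: "last ys = w"
    and st: "\<forall>i < length ys - 1. {ys ! i, ys ! Suc i} \<in> F \<and> d (ys ! i) w > d (ys ! Suc i) w"
    using assms(1) unfolding greedy_path_def by auto
  have y0: "ys ! 0 = y" using ne hy by (simp add: hd_conv_nth)
  have H: "\<forall>i < length (x # ys) - 1. {(x # ys) ! i, (x # ys) ! Suc i} \<in> F \<and> d ((x # ys) ! Suc i) w < d ((x # ys) ! i) w"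
  proof (intro allI impI)
    fix i assume i: "i < length (x # ys) - 1"
    show "{(x # ys) ! i, (x # ys) ! Suc i} \<in> F \<and> d ((x # ys) ! Suc i) w < d ((x # ys) ! i) w"
    proof (cases i)
      case 0
      then show ?thesis using assms y0 by simp
    next
      case (Suc j)
      then have "j < length ys - 1" using i by simp
      then show ?thesis using st Suc by simp
    qed
  qed
  show ?thesis unfolding greedy_path_def using H ne ly by simp
qed

lemma gc_first:
  assumes "greedy_path F d u w xs" "u \<noteq> w"
  shows "\<exists>y. {u, y} \<in> F \<and> d y w < d u w"
proof -
  have ne: "xs \<noteq> []" and h: "hd xs = u" and l: "last xs = w"
    and st: "\<forall>i < length xs - 1. {xs ! i, xs ! Suc i} \<in> F \<and> d (xs ! i) w > d (xs ! Suc i) w"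
    using assms(1) unfolding greedy_path_def by auto
  have "length xs \<noteq> 1"
  proof
    assume "length xs = 1"
    then obtain a where "xs = [a]" by (cases xs) auto
    then show False using h l assms(2) by simp
  qed
  then have "0 < length xs - 1" using ne by (cases xs) auto
  then have "{xs ! 0, xs ! 1} \<in> F \<and> d (xs ! 0) w > d (xs ! 1) w" using st by auto
  moreover have "xs ! 0 = u" using ne h by (simp add: hd_conv_nth)
  ultimately show ?thesis by auto
qed

lemma sat_gc_aux:
  assumes fin: "finite P"
    and sat: "\<forall>x\<in>P. \<forall>w\<in>P - {x}. \<exists>y\<in>P. {x, y} \<in> F \<and> d y w < d x w"
    and w: "w \<in> P"
  shows "card {z\<in>P. d z w < d x w} = n \<Longrightarrow> x \<in> P \<Longrightarrow> \<exists>xs. greedy_path F d x w xs"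
proof (induction n arbitrary: x rule: less_induct)
  case (less n)
  show ?case
  proof (cases "x = w")
    case True
    then have "greedy_path F d x w [x]" unfolding greedy_path_def by simp
    then show ?thesis by blast
  next
    case False
    then have "w \<in> P - {x}" using w by blast
    have "\<exists>y\<in>P. {x, y} \<in> F \<and> d y w < d x w"
      using bspec[OF bspec[OF sat less.prems(2)] \<open>w \<in> P - {x}\<close>] .
    then obtain y where y: "y \<in> P" "{x, y} \<in> F" "d y w < d x w"
      by (elim bexE conjE)
    have sub: "{z\<in>P. d z w < d y w} \<subset> {z\<in>P. d z w < d x w}"
    proof
      show "{z\<in>P. d z w < d y w} \<subseteq> {z\<in>P. d z w < d x w}" using y(3) by auto
      show "{z\<in>P. d z w < d y w} \<noteq> {z\<in>P. d z w < d x w}"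
      proof
        assume "{z\<in>P. d z w < d y w} = {z\<in>P. d z w < d x w}"
        moreover have "y \<in> {z\<in>P. d z w < d x w}" using y by blast
        ultimately have "y \<in> {z\<in>P. d z w < d y w}" by (simp only:)
        then show False by simp
      qed
    qed
    have fs: "finite {z\<in>P. d z w < d x w}" using fin by simp
    have "card {z\<in>P. d z w < d y w} < card {z\<in>P. d z w < d x w}"
      by (rule psubset_card_mono[OF fs sub])
    then have "card {z\<in>P. d z w < d y w} < n" using less.prems(1) by simp
    then obtain ys where "greedy_path F d y w ys"
      using less.IH[OF _ refl y(1)] by blast
    then have "greedy_path F d x w (x # ys)" using path_step[where x=x and y=y and F=F] y(2,3) by blast
    then show ?thesis by blast
  qed
qed

lemma sat_gc:
  assumes fin: "finite P"
    and sat: "\<forall>x\<in>P. \<forall>w\<in>P - {x}. \<exists>y\<in>P. {x, y} \<in> F \<and> d y w < d x w"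
  shows "\<forall>x\<in>P. greedy_connected P d F x"
  unfolding greedy_connected_def
proof (intro ballI)
  fix x w assume "x \<in> P" "w \<in> P - {x}"
  then show "\<exists>xs. greedy_path F d x w xs"
    using sat_gc_aux[OF fin sat, of w x "card {z\<in>P. d z w < d x w}"] by blast
qed

lemma so_facts:
  assumes "social_optimum P d E"
  shows "E \<subseteq> all_edges P" "\<forall>u\<in>P. greedy_connected P d E u"
    "\<And>E'. E' \<subseteq> all_edges P \<Longrightarrow> (\<forall>u\<in>P. greedy_connected P d E' u) \<Longrightarrow> card E \<le> card E'"
  using assms unfolding social_optimum_def by auto

lemma handshake:
  assumes finV: "finite V" and finA: "finite A"
    and two: "\<And>e. e \<in> A \<Longrightarrow> card {u\<in>V. u \<in> e} = 2"
  shows "(\<Sum>u\<in>V. card {e\<in>A. u \<in> e}) = 2 * card A"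
proof -
  have "(\<Sum>u\<in>V. card {e\<in>A. u \<in> e}) = (\<Sum>u\<in>V. \<Sum>e\<in>A. if u \<in> e then 1 else 0)"
    using finA by (simp add: sum.inter_filter[symmetric])
  also have "\<dots> = (\<Sum>e\<in>A. \<Sum>u\<in>V. if u \<in> e then 1 else 0)"
    by (rule sum.swap)
  also have "\<dots> = (\<Sum>e\<in>A. card {u\<in>V. u \<in> e})"
    using finV by (simp add: sum.inter_filter[symmetric])
  also have "\<dots> = (\<Sum>e\<in>A. 2)" using two by simp
  finally show ?thesis by simp
qed

definition satby :: "'a set \<Rightarrow> ('a \<Rightarrow> 'a \<Rightarrow> real) \<Rightarrow> 'a \<Rightarrow> 'a set \<Rightarrow> bool" where
  "satby P d u X \<longleftrightarrow> (\<forall>w\<in>P - {u}. \<exists>y\<in>X. d y w < d u w)"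

definition ownok :: "'a set \<Rightarrow> ('a \<Rightarrow> 'a \<Rightarrow> real) \<Rightarrow> 'a set set \<Rightarrow> 'a \<Rightarrow> 'a set set \<Rightarrow> bool" where
  "ownok P d E u S \<longleftrightarrow> (\<forall>Y. Y \<subseteq> P - {u} \<longrightarrow>
     satby P d u ({v. {u, v} \<in> E \<and> {u, v} \<notin> S} \<union> Y) \<longrightarrow> card S \<le> 2 * card Y)"

lemma peel:
  assumes fin: "finite P" and so: "social_optimum P d E" and V: "V \<subseteq> P" "V \<noteq> {}"
  shows "\<exists>u\<in>V. ownok P d E u {e\<in>E. u \<in> e \<and> e \<subseteq> V}"
proof (rule ccontr)
  define D where "D u = {e\<in>E. u \<in> e \<and> e \<subseteq> V}" for u
  define Ou where "Ou u = {v. {u, v} \<in> E \<and> {u, v} \<notin> D u}" for u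
  assume "\<not> ?thesis"
  then have "\<forall>u\<in>V. \<not> ownok P d E u (D u)" unfolding D_def by blast
  then have "\<forall>u\<in>V. \<exists>Y. Y \<subseteq> P - {u} \<and> satby P d u (Ou u \<union> Y) \<and> 2 * card Y < card (D u)"
    unfolding ownok_def Ou_def by (auto simp: not_le)
  then have "\<exists>Yf. \<forall>u\<in>V. Yf u \<subseteq> P - {u} \<and> satby P d u (Ou u \<union> Yf u) \<and> 2 * card (Yf u) < card (D u)"
    by (rule bchoice)
  then obtain Yf where Yf0: "\<forall>u\<in>V. Yf u \<subseteq> P - {u} \<and> satby P d u (Ou u \<union> Yf u) \<and> 2 * card (Yf u) < card (D u)"
    by (elim exE)
  then have Yf: "\<And>u. u \<in> V \<Longrightarrow> Yf u \<subseteq> P - {u} \<and> satby P d u (Ou u \<union> Yf u) \<and> 2 * card (Yf u) < card (D u)"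
    by blast
  have EP: "E \<subseteq> all_edges P" and gcE: "\<forall>u\<in>P. greedy_connected P d E u"
    using so_facts[OF so] by auto
  have finE: "finite E" using finite_all_edges[OF fin] EP finite_subset by blast
  have finV: "finite V" using fin V(1) finite_subset by blast
  define EV where "EV = {e\<in>E. e \<subseteq> V}"
  define F where "F = (E - EV) \<union> (\<Union>u\<in>V. (\<lambda>y. {u, y}) ` Yf u)"
  have FP: "F \<subseteq> all_edges P"
  proof
    fix e assume "e \<in> F"
    then consider "e \<in> E" | u y where "u \<in> V" "y \<in> Yf u" "e = {u, y}"
      unfolding F_def by blast
    then show "e \<in> all_edges P"
    proof cases
      case 1 then show ?thesis using EP by blast
    next
      case 2
      then have "y \<in> P" "y \<noteq> u" using Yf by auto
      then show ?thesis using 2 V(1) unfolding all_edges_def by blast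
    qed
  qed
  have sat: "\<forall>x\<in>P. \<forall>w\<in>P - {x}. \<exists>y\<in>P. {x, y} \<in> F \<and> d y w < d x w"
  proof (intro ballI)
    fix x w assume x: "x \<in> P" and w: "w \<in> P - {x}"
    show "\<exists>y\<in>P. {x, y} \<in> F \<and> d y w < d x w"
    proof (cases "x \<in> V")
      case False
      obtain xs where "greedy_path E d x w xs" using gcE x w unfolding greedy_connected_def by blast
      then obtain y where y: "{x, y} \<in> E" "d y w < d x w" using gc_first[of E d x w xs] w by blast
      have "y \<in> P" using all_edges_pair[of x y P] y(1) EP by blast
      moreover have "{x, y} \<in> F" using y(1) False unfolding F_def EV_def by auto
      ultimately show ?thesis using y by blast
    next
      case True
      then have "satby P d x (Ou x \<union> Yf x)" using Yf by blast
      then obtain y where y: "y \<in> Ou x \<union> Yf x" "d y w < d x w"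
        using w unfolding satby_def by blast
      show ?thesis
      proof (cases "y \<in> Yf x")
        case True
        then have "y \<in> P" using Yf \<open>x \<in> V\<close> by blast
        moreover have "{x, y} \<in> F" using True \<open>x \<in> V\<close> unfolding F_def by blast
        ultimately show ?thesis using y by blast
      next
        case False
        then have e: "{x, y} \<in> E" "\<not> {x, y} \<subseteq> V" using y(1) unfolding Ou_def D_def by auto
        have "y \<in> P" using all_edges_pair[of x y P] e(1) EP by blast
        moreover have "{x, y} \<in> F" using e unfolding F_def EV_def by auto
        ultimately show ?thesis using y by blast
      qed
    qed
  qed
  have "\<forall>x\<in>P. greedy_connected P d F x" using sat_gc[OF fin sat] .
  then have le: "card E \<le> card F" using so_facts(3)[OF so FP] by blast
  have finY: "\<And>u. u \<in> V \<Longrightarrow> finite (Yf u)" using Yf fin finite_subset by blast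
  have "card F \<le> card (E - EV) + card (\<Union>u\<in>V. (\<lambda>y. {u, y}) ` Yf u)"
    unfolding F_def by (rule card_Un_le)
  also have "card (\<Union>u\<in>V. (\<lambda>y. {u, y}) ` Yf u) \<le> (\<Sum>u\<in>V. card ((\<lambda>y. {u, y}) ` Yf u))"
    using finV by (rule card_UN_le)
  also have "(\<Sum>u\<in>V. card ((\<lambda>y. {u, y}) ` Yf u)) \<le> (\<Sum>u\<in>V. card (Yf u))"
    by (rule sum_mono) (rule card_image_le, simp add: finY)
  finally have c1: "card F \<le> card (E - EV) + (\<Sum>u\<in>V. card (Yf u))" by simp
  have EVs: "EV \<subseteq> E" unfolding EV_def by auto
  have finEV: "finite EV" using finE EVs finite_subset by blast
  have cd: "card (E - EV) = card E - card EV" using card_Diff_subset[OF finEV EVs] .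
  have cEV: "card EV \<le> card E" using card_mono[OF finE EVs] .
  have two: "\<And>e. e \<in> EV \<Longrightarrow> card {u\<in>V. u \<in> e} = 2"
  proof -
    fix e assume e: "e \<in> EV"
    then obtain a b where ab: "e = {a, b}" "a \<noteq> b" using all_edges_mem EP unfolding EV_def by blast
    have "{u\<in>V. u \<in> e} = e" using e unfolding EV_def by auto
    then show "card {u\<in>V. u \<in> e} = 2" using ab by simp
  qed
  have hs: "(\<Sum>u\<in>V. card {e\<in>EV. u \<in> e}) = 2 * card EV"
    using handshake[OF finV finEV two] .
  have eqs: "\<And>u. {e\<in>EV. u \<in> e} = D u" unfolding EV_def D_def by auto
  have "(\<Sum>u\<in>V. 2 * card (Yf u)) < (\<Sum>u\<in>V. card (D u))"
    by (rule sum_strict_mono[OF finV V(2)]) (use Yf in blast)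
  then have "2 * (\<Sum>u\<in>V. card (Yf u)) < 2 * card EV"
    using hs eqs by (simp add: sum_distrib_left)
  then have "(\<Sum>u\<in>V. card (Yf u)) < card EV" by simp
  then have "card F < card E" using c1 cd cEV by linarith
  then show False using le by simp
qed

lemma orient:
  assumes fin: "finite P" and so: "social_optimum P d E"
  shows "V \<subseteq> P \<Longrightarrow> \<exists>s. (\<forall>u\<in>V. s u \<subseteq> E \<and> (\<forall>e\<in>s u. u \<in> e \<and> e \<subseteq> V) \<and> ownok P d E u (s u)) \<and>
       (\<forall>e\<in>E. e \<subseteq> V \<longrightarrow> (\<exists>!u. u \<in> V \<and> e \<in> s u))"
proof (induction "card V" arbitrary: V rule: less_induct)
  case less
  have EP: "E \<subseteq> all_edges P" using so_facts[OF so] by auto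
  have nonempty: "\<And>e. e \<in> E \<Longrightarrow> e \<noteq> {}" using EP all_edges_mem by blast
  show ?case
  proof (cases "V = {}")
    case True
    show ?thesis
      by (rule exI[of _ "\<lambda>_. {}"]) (use True nonempty in auto)
  next
    case False
    obtain u where u: "u \<in> V" "ownok P d E u {e\<in>E. u \<in> e \<and> e \<subseteq> V}"
      using peel[OF fin so less.prems False] by blast
    have finV: "finite V" using fin less.prems finite_subset by blast
    have "card (V - {u}) < card V" using card_Diff1_less[OF finV u(1)] .
    moreover have "V - {u} \<subseteq> P" using less.prems by blast
    ultimately have "\<exists>s'. (\<forall>x\<in>V - {u}. s' x \<subseteq> E \<and> (\<forall>e\<in>s' x. x \<in> e \<and> e \<subseteq> V - {u}) \<and> ownok P d E x (s' x)) \<and>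
      (\<forall>e\<in>E. e \<subseteq> V - {u} \<longrightarrow> (\<exists>!x. x \<in> V - {u} \<and> e \<in> s' x))"
      by (rule less.hyps)
    then obtain s' where s': "\<forall>x\<in>V - {u}. s' x \<subseteq> E \<and> (\<forall>e\<in>s' x. x \<in> e \<and> e \<subseteq> V - {u}) \<and> ownok P d E x (s' x)"
      "\<forall>e\<in>E. e \<subseteq> V - {u} \<longrightarrow> (\<exists>!x. x \<in> V - {u} \<and> e \<in> s' x)"
      by (elim exE conjE)
    define s where "s = s'(u := {e\<in>E. u \<in> e \<and> e \<subseteq> V})"
    have A: "\<forall>x\<in>V. s x \<subseteq> E \<and> (\<forall>e\<in>s x. x \<in> e \<and> e \<subseteq> V) \<and> ownok P d E x (s x)"
    proof
      fix x assume x: "x \<in> V"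
      show "s x \<subseteq> E \<and> (\<forall>e\<in>s x. x \<in> e \<and> e \<subseteq> V) \<and> ownok P d E x (s x)"
      proof (cases "x = u")
        case True
        then have sx: "s x = {e\<in>E. x \<in> e \<and> e \<subseteq> V}" unfolding s_def by simp
        have o: "ownok P d E x {e\<in>E. x \<in> e \<and> e \<subseteq> V}" using u(2) True by simp
        show ?thesis unfolding sx
        proof (intro conjI)
          show "{e\<in>E. x \<in> e \<and> e \<subseteq> V} \<subseteq> E" by (rule Collect_subset)
          show "\<forall>e\<in>{e\<in>E. x \<in> e \<and> e \<subseteq> V}. x \<in> e \<and> e \<subseteq> V" by simp
        qed (rule o)
      next
        case False
        then have xV: "x \<in> V - {u}" using x by blast
        have sx: "s x = s' x" using False unfolding s_def by simp
        have h: "s' x \<subseteq> E \<and> (\<forall>e\<in>s' x. x \<in> e \<and> e \<subseteq> V - {u}) \<and> ownok P d E x (s' x)"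
          using bspec[OF s'(1) xV] .
        then show ?thesis unfolding sx by blast
      qed
    qed
    have B: "\<forall>e\<in>E. e \<subseteq> V \<longrightarrow> (\<exists>!x. x \<in> V \<and> e \<in> s x)"
    proof (intro ballI impI)
      fix e assume e: "e \<in> E" "e \<subseteq> V"
      show "\<exists>!x. x \<in> V \<and> e \<in> s x"
      proof (cases "u \<in> e")
        case True
        show ?thesis
        proof (rule ex1I[of _ u])
          show "u \<in> V \<and> e \<in> s u" using u e True unfolding s_def by auto
        next
          fix z assume z: "z \<in> V \<and> e \<in> s z"
          show "z = u"
          proof (rule ccontr)
            assume "z \<noteq> u"
            then have "e \<in> s' z" "z \<in> V - {u}" using z unfolding s_def by auto
            then have "e \<subseteq> V - {u}" using s'(1) by blast
            then show False using True by blast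
          qed
        qed
      next
        case False
        then have ev: "e \<subseteq> V - {u}" using e by auto
        then obtain x where x: "x \<in> V - {u}" "e \<in> s' x"
          "\<And>z. z \<in> V - {u} \<and> e \<in> s' z \<Longrightarrow> z = x"
          using s'(2) e(1) by metis
        show ?thesis
        proof (rule ex1I[of _ x])
          show "x \<in> V \<and> e \<in> s x" using x unfolding s_def by auto
        next
          fix z assume z: "z \<in> V \<and> e \<in> s z"
          have "z \<noteq> u" using z False unfolding s_def by auto
          then show "z = x" using z x(3) unfolding s_def by auto
        qed
      qed
    qed
    show ?thesis using A B by blast
  qed
qed

theorem mainTheorem16:
  fixes P :: "'a set" and d :: "'a \<Rightarrow> 'a \<Rightarrow> real" and E :: "'a set set"
  assumes "finite P" and "metric_on P d" and "social_optimum P d E"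
  shows "\<exists>s. (\<forall>u\<in>P. valid_strategy P u (s u)) \<and> network P s = E \<and>
             (\<forall>e\<in>E. \<exists>!u. u \<in> P \<and> e \<in> s u) \<and> approx_NE P d 2 s"
proof -
  have fin: "finite P" and so: "social_optimum P d E" using assms by auto
  have EP: "E \<subseteq> all_edges P" and gcE: "\<forall>u\<in>P. greedy_connected P d E u"
    using so_facts[OF so] by auto
  have eP: "\<And>e. e \<in> E \<Longrightarrow> e \<subseteq> P" using EP unfolding all_edges_def by blast
  from orient[OF fin so subset_refl] obtain s where
    sAB: "(\<forall>u\<in>P. s u \<subseteq> E \<and> (\<forall>e\<in>s u. u \<in> e \<and> e \<subseteq> P) \<and> ownok P d E u (s u)) \<and>
      (\<forall>e\<in>E. e \<subseteq> P \<longrightarrow> (\<exists>!u. u \<in> P \<and> e \<in> s u))" ..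
  have s1: "\<forall>u\<in>P. s u \<subseteq> E \<and> (\<forall>e\<in>s u. u \<in> e \<and> e \<subseteq> P) \<and> ownok P d E u (s u)"
    using sAB by (rule conjunct1)
  have s2: "\<forall>e\<in>E. e \<subseteq> P \<longrightarrow> (\<exists>!u. u \<in> P \<and> e \<in> s u)"
    using sAB by (rule conjunct2)
  have uniq: "\<forall>e\<in>E. \<exists>!u. u \<in> P \<and> e \<in> s u"
  proof
    fix e assume e: "e \<in> E"
    show "\<exists>!u. u \<in> P \<and> e \<in> s u" using mp[OF bspec[OF s2 e] eP[OF e]] .
  qed
  have valid: "\<forall>u\<in>P. valid_strategy P u (s u)"
  proof
    fix u assume u: "u \<in> P"
    show "valid_strategy P u (s u)"
      unfolding valid_strategy_def
    proof
      fix e assume e: "e \<in> s u"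
      then have "e \<in> E" "u \<in> e" using s1 u by auto
      then obtain a b where ab: "e = {a, b}" "a \<in> P" "b \<in> P" "a \<noteq> b"
        using all_edges_mem EP by blast
      show "e \<in> {{u, v} |v. v \<in> P - {u}}"
      proof (cases "u = a")
        case True
        then show ?thesis using ab by blast
      next
        case False
        then have "u = b" using ab \<open>u \<in> e\<close> by blast
        then have "e = {u, a}" using ab by blast
        then show ?thesis using ab False by blast
      qed
    qed
  qed
  have net: "network P s = E"
  proof
    show "network P s \<subseteq> E" unfolding network_def using s1 by blast
    show "E \<subseteq> network P s" unfolding network_def using uniq by blast
  qed
  have ne: "approx_NE P d 2 s"
    unfolding approx_NE_def
  proof (intro ballI allI impI)
    fix u S' assume u: "u \<in> P" and vS: "valid_strategy P u S'"
    have c0: "cost P d s u = ereal (real (card (s u)))"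
      unfolding cost_def net using gcE u by simp
    show "\<not> cost P d (s(u := S')) u < cost P d s u / ereal 2"
    proof (cases "greedy_connected P d (network P (s(u := S'))) u")
      case False
      then show ?thesis unfolding cost_def c0 by simp
    next
      case True
      define Y where "Y = {v\<in>P - {u}. {u, v} \<in> S'}"
      have S'sub: "S' \<subseteq> (\<lambda>v. {u, v}) ` (P - {u})" using vS unfolding valid_strategy_def by blast
      have finS': "finite S'" using S'sub fin finite_subset by blast
      have injY: "inj_on (\<lambda>v. {u, v}) Y" unfolding inj_on_def Y_def by (auto simp: doubleton_eq_iff)
      have cY: "card Y \<le> card S'"
        by (rule card_inj_on_le[OF injY _ finS']) (auto simp: Y_def)
      have YP: "Y \<subseteq> P - {u}" unfolding Y_def by blast
      have sat: "satby P d u ({v. {u, v} \<in> E \<and> {u, v} \<notin> s u} \<union> Y)"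
        unfolding satby_def
      proof
        fix w assume w: "w \<in> P - {u}"
        obtain xs where "greedy_path (network P (s(u := S'))) d u w xs"
          using True w unfolding greedy_connected_def by blast
        then obtain y where y: "{u, y} \<in> network P (s(u := S'))" "d y w < d u w"
          using gc_first[of "network P (s(u := S'))" d u w xs] w by blast
        then obtain z where z: "z \<in> P" "{u, y} \<in> (s(u := S')) z" unfolding network_def by blast
        show "\<exists>y\<in>{v. {u, v} \<in> E \<and> {u, v} \<notin> s u} \<union> Y. d y w < d u w"
        proof (cases "z = u")
          case True
          then have "{u, y} \<in> S'" using z by simp
          then obtain v where v: "{u, y} = {u, v}" "v \<in> P - {u}" using vS unfolding valid_strategy_def by blast
          then have "y = v" by (auto simp: doubleton_eq_iff)
          then have "y \<in> Y" using v \<open>{u, y} \<in> S'\<close> unfolding Y_def by blast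
          then show ?thesis using y(2) by blast
        next
          case False
          then have zs: "{u, y} \<in> s z" using z by simp
          then have yE: "{u, y} \<in> E" using s1 z(1) by blast
          have "{u, y} \<notin> s u"
          proof
            assume "{u, y} \<in> s u"
            then show False using uniq yE zs z(1) u False by blast
          qed
          then show ?thesis using yE y(2) by blast
        qed
      qed
      have "card (s u) \<le> 2 * card Y" using s1 u YP sat unfolding ownok_def by blast
      then have "card (s u) \<le> 2 * card S'" using cY by linarith
      then have r: "real (card (s u)) / 2 \<le> real (card S')" by simp
      have c1: "cost P d (s(u := S')) u = ereal (real (card ((s(u := S')) u)))"
        unfolding cost_def using True by simp
      show ?thesis unfolding c1 c0 using r by simp
    qed
  qed
  show ?thesis using valid net uniq ne by blast
qed

end
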